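(* If $\mathrm{Re}(z)<1/2$, then $$z\gamma(z)=-\log(1-z)+\sum_{n=1}^{\infty}\left(\frac{-z}{1-z}\right)^n\sum_{k=0}^{n}(-1)^{k+1}\binom{n}{k}\log(k+1).$$ Equivalently, if $|w|<1$, then $$w\gamma\!\left(\frac{-w}{1-w}\right)=-(1-w)\log(1-w)+(1-w)\sum_{n=1}^{\infty}w^n\sum_{k=0}^{n}(-1)^k\binom{n}{k}\log(k+1).$$
   Context: $\gamma(z)$ is the generalized-Euler-constant function: for $|z|\le1$, $\gamma(z)=\sum_{n=1}^{\infty} z^{n-1}\left(\frac{1}{n}-\log\frac{n+1}{n}\right)$, and for $z\in\mathbb{C}\setminus[1,\infty)$ it denotes the analytic continuation $\gamma(z)=\int_0^1\frac{1-x+\log x}{(1-xz)\log x}\,dx$. $\log$ is the principal branch. *)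

theory Defs
  imports "HOL-Analysis.Analysis"
begin

text \<open>Generalized Euler constant function, defined on the whole cut plane
  C minus [1,infinity) by its integral representation
  gamma(z) = integral_0^1 (1 - x + log x) / ((1 - x z) log x) dx.\<close>
definition gen_euler_gamma :: "complex \<Rightarrow> complex" where
  "gen_euler_gamma z =
     integral {0..1::real}
       (\<lambda>x. complex_of_real (1 - x + ln x) / ((1 - complex_of_real x * z) * complex_of_real (ln x)))"

end

theory Submission
  imports Defs
begin

definition FF :: "nat \<Rightarrow> real \<Rightarrow> real" where "FF k x = (x^k - 1) / ln x"

lemma FF_bound: assumes "x \<in> {0..1}" shows "0 \<le> FF k x \<and> FF k x \<le> real k"
proof (cases "x = 0 \<or> x = 1")
  case True then show ?thesis by (auto simp: FF_def)
next
  case False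
  then have x: "0 < x" "x < 1" using assms by auto
  have l: "ln x < 0" using x by simp
  have p: "x^k \<le> 1" using x by (simp add: power_le_one)
  have "ln (x^k) \<le> x^k - 1" using x by (intro ln_le_minus_one) simp
  then have "real k * ln x \<le> x^k - 1" using x by (simp add: ln_realpow)
  then have "(x^k - 1) / ln x \<le> real k" using l by (simp add: neg_divide_le_eq)  
  moreover have "0 \<le> (x^k - 1) / ln x" using l p by (intro divide_nonpos_neg) auto
  ultimately show ?thesis by (simp add: FF_def)
qed

lemma FF_cont: "continuous_on {0<..<1} (FF k)"
  unfolding FF_def by (intro continuous_intros) auto

lemma bounded_cont_integrable:
  fixes f :: "real \<Rightarrow> 'b::euclidean_space"
  assumes "continuous_on {a<..<b} f" "\<And>x. x \<in> {a<..<b} \<Longrightarrow> norm (f x) \<le> C"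
  shows "f integrable_on {a<..<b}"
proof (rule measurable_bounded_by_integrable_imp_integrable)
  show "f \<in> borel_measurable (lebesgue_on {a<..<b})"
    by (rule continuous_imp_measurable_on_sets_lebesgue[OF assms(1)]) auto
  show "(\<lambda>x. C) integrable_on {a<..<b}"
    by (rule integrable_on_Icc_iff_Ioo[THEN iffD1, OF integrable_const_ivl])
qed (use assms in auto)

lemma FF_integrable: "FF k integrable_on {0..1}"
  unfolding integrable_on_Icc_iff_Ioo
  by (rule bounded_cont_integrable[OF FF_cont, of _ "real k"]) (use FF_bound in auto)


lemma inner1:
  assumes x: "0 < x" "x < 1"
  shows "((\<lambda>t. x powr t) has_integral FF k x) {0..real k}"
proof -
  have l: "ln x \<noteq> 0" using x by simp
  have "((\<lambda>t. x powr t) has_integral (exp (real k * ln x) / ln x - exp (0 * ln x) / ln x)) {0..real k}"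
  proof (rule fundamental_theorem_of_calculus)
    fix t assume "t \<in> {0..real k}"
    have "((\<lambda>t. exp (t * ln x) / ln x) has_real_derivative x powr t) (at t)"
      using x l by (auto intro!: derivative_eq_intros simp: powr_def)
    then show "((\<lambda>t. exp (t * ln x) / ln x) has_vector_derivative x powr t) (at t within {0..real k})"
      unfolding has_real_derivative_iff_has_vector_derivative[symmetric]
      by (rule has_field_derivative_at_within)
  qed simp
  moreover have "exp (real k * ln x) = x ^ k" using x
    by (metis exp_ln ln_realpow zero_less_power)
  ultimately show ?thesis by (simp add: FF_def diff_divide_distrib)
qed

lemma inner2:
  fixes e t :: real
  assumes e: "0 < e" "e \<le> 1" and t: "0 \<le> t"
  shows "((\<lambda>x. x powr t) has_integral (1 - e powr (t+1)) / (t+1)) {e..1}"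
proof -
  define F where "F = (\<lambda>x::real. x powr (t+1) / (t+1))"
  have "((\<lambda>x. x powr t) has_integral (F 1 - F e)) {e..1}"
  proof (rule fundamental_theorem_of_calculus)
    fix x assume x: "x \<in> {e..1}"
    then have "x > 0" using e by auto
    have "((\<lambda>x. x powr (t+1) / (t+1)) has_real_derivative ((t+1) * x powr (t + 1 - 1)) / (t+1)) (at x)"
      by (rule DERIV_cdivide[OF has_real_derivative_powr[OF \<open>x > 0\<close>]])
    then have "(F has_real_derivative x powr t) (at x)"
      using t by (simp add: F_def)
    then show "(F has_vector_derivative x powr t) (at x within {e..1})"
      unfolding has_real_derivative_iff_has_vector_derivative[symmetric]
      by (rule has_field_derivative_at_within)
  qed (use e in simp)
  then show ?thesis by (simp add: F_def diff_divide_distrib)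
qed

lemma swap_eps:
  assumes e: "0 < e" "e < 1"
  shows "integral {e..1} (FF k) = integral {0..real k} (\<lambda>t. (1 - e powr (t+1)) / (t+1))"
proof -
  have c: "continuous_on (cbox (e, 0) (1, real k)) (\<lambda>(x, t). x powr t)"
  proof -
    have "continuous_on (cbox (e, 0) (1, real k)) (\<lambda>p. exp (snd p * ln (fst p)))"
      using e by (intro continuous_intros) (auto simp: cbox_Pair_iff)
    moreover have "p \<in> cbox (e, 0) (1, real k) \<Longrightarrow> exp (snd p * ln (fst p)) = (\<lambda>(x, t). x powr t) p" for p
      using e by (auto simp: cbox_Pair_iff powr_def split: prod.splits)
    ultimately show ?thesis by (rule continuous_on_eq)
  qed
  have sw: "integral {e..1} (\<lambda>x. integral {0..real k} (\<lambda>t. x powr t))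
      = integral {0..real k} (\<lambda>t. integral {e..1} (\<lambda>x. x powr t))"
    using integral_swap_continuous[OF c] by (simp add: cbox_interval)
  have "integral {e..1} (FF k) = integral {e..1} (\<lambda>x. integral {0..real k} (\<lambda>t. x powr t))"
  proof (rule integral_spike[of "{1}"])
    fix x assume "x \<in> {e..1} - {1}"
    then show "integral {0..real k} (\<lambda>t. x powr t) = FF k x"
      using inner1[of x k] e by (auto intro: integral_unique)
  qed auto
  also have "\<dots> = integral {0..real k} (\<lambda>t. integral {e..1} (\<lambda>x. x powr t))" by (rule sw)
  also have "\<dots> = integral {0..real k} (\<lambda>t. (1 - e powr (t+1)) / (t+1))"
    using e by (intro integral_cong integral_unique inner2) auto
  finally show ?thesis .
qed


lemma int_bound_ivl:
  fixes f :: "real \<Rightarrow> 'a::euclidean_space"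
  assumes "f integrable_on {a..b}" "a \<le> b" "\<And>x. x \<in> {a..b} \<Longrightarrow> norm (f x) \<le> B"
  shows "norm (integral {a..b} f) \<le> B * (b - a)"
proof -
  have "norm (integral {a..b} f) \<le> integral {a..b} (\<lambda>x. B)"
    by (rule integral_norm_bound_integral) (use assms in auto)
  then show ?thesis using assms(2) by (simp add: mult.commute)
qed

lemma int_recip: "((\<lambda>t. 1 / (t + 1)) has_integral ln (real k + 1)) {0..real k}"
proof -
  define F where "F = (\<lambda>t::real. ln (t + 1))"
  have "((\<lambda>t. 1 / (t + 1)) has_integral (F (real k) - F 0)) {0..real k}"
  proof (rule fundamental_theorem_of_calculus)
    fix t assume t: "t \<in> {0..real k}"
    have "(F has_real_derivative 1 / (t + 1)) (at t)"
      unfolding F_def using t by (auto intro!: derivative_eq_intros)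
    then show "(F has_vector_derivative 1 / (t + 1)) (at t within {0..real k})"
      unfolding has_real_derivative_iff_has_vector_derivative[symmetric]
      by (rule has_field_derivative_at_within)
  qed simp
  then show ?thesis by (simp add: F_def)
qed

lemma FF_eps_bound:
  assumes e: "0 < e" "e < 1"
  shows "\<bar>integral {0..1} (FF k) - ln (real k + 1)\<bar> \<le> 2 * real k * e"
proof -
  have i1: "integral {0..e} (FF k) + integral {e..1} (FF k) = integral {0..1} (FF k)"
    by (rule Henstock_Kurzweil_Integration.integral_combine) (use e FF_integrable in auto)
  have "FF k integrable_on {0..e}"
    by (rule integrable_subinterval_real[OF FF_integrable]) (use e in auto)
  then have "norm (integral {0..e} (FF k)) \<le> real k * (e - 0)"
    by (rule int_bound_ivl) (use e FF_bound in auto)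
  then have b1: "\<bar>integral {0..e} (FF k)\<bar> \<le> real k * e" by simp
  define G where "G = (\<lambda>t::real. e powr (t+1) / (t+1))"
  have Gc: "continuous_on {0..real k} G"
    unfolding G_def using e by (intro continuous_intros) auto
  then have Gi: "(G has_integral integral {0..real k} G) {0..real k}"
    by (intro integrable_integral integrable_continuous_interval)
  have "((\<lambda>t. 1 / (t + 1) - G t) has_integral (ln (real k + 1) - integral {0..real k} G)) {0..real k}"
    by (intro has_integral_diff int_recip Gi)
  moreover have "(1 - e powr (t+1)) / (t+1) = 1 / (t + 1) - G t" for t
    by (simp add: G_def diff_divide_distrib)
  ultimately have i2: "integral {e..1} (FF k) = ln (real k + 1) - integral {0..real k} G"
    using swap_eps[OF e, of k] by (simp add: integral_unique)
  have "norm (integral {0..real k} G) \<le> e * (real k - 0)"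
  proof (rule int_bound_ivl)
    show "G integrable_on {0..real k}" using Gi by blast
    fix t assume "t \<in> {0..real k}"
    then have t: "0 \<le> t" by simp
    have "e powr (t+1) \<le> e" using e t by (intro powr_le_one_le) auto
    moreover have "0 \<le> e powr (t+1)" by simp
    moreover have "e \<le> e * (t+1)" using e t by (simp add: algebra_simps)
    ultimately have "e powr (t+1) \<le> e * (t+1)" by linarith
    then have "e powr (t+1) / (t+1) \<le> e" using t by (simp add: pos_divide_le_eq)
    then show "norm (G t) \<le> e" using t by (simp add: G_def)
  qed simp
  then have b2: "\<bar>integral {0..real k} G\<bar> \<le> e * real k" by simp
  have "2 * real k * e = real k * e + e * real k" by simp
  then show ?thesis using i1 i2 b1 b2 by linarith
qed

lemma FF_integral: "(FF k has_integral ln (real k + 1)) {0..1}"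
proof -
  define D where "D = \<bar>integral {0..1} (FF k) - ln (real k + 1)\<bar>"
  have "D = 0"
  proof (rule ccontr)
    assume "D \<noteq> 0"
    then have Dp: "D > 0" by (simp add: D_def)
    define e where "e = min (1/2) (D / (4 * real k + 4))"
    have e: "0 < e" "e < 1" using Dp by (auto simp: e_def)
    have "D \<le> 2 * real k * e" using FF_eps_bound[OF e, of k] by (simp add: D_def)
    also have "\<dots> \<le> 2 * real k * (D / (4 * real k + 4))"
      by (intro mult_left_mono) (auto simp: e_def)
    also have "\<dots> < D" using Dp by (simp add: field_simps add_pos_nonneg)
    finally show False by simp
  qed
  then show ?thesis using FF_integrable[of k] by (simp add: D_def has_integral_integral)
qed


lemma binom_poly: "(\<Sum>k=0..n. (-1)^k * real (n choose k) * x^k) = (1 - x)^n"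
proof -
  have "(-x + 1)^n = (\<Sum>k=0..n. real (n choose k) * (-x)^k * 1^(n-k))"
    using binomial_ring[of "-x" 1 n] by (simp add: atLeast0AtMost)
  also have "\<dots> = (\<Sum>k=0..n. (-1)^k * real (n choose k) * x^k)"
    by (intro sum.cong refl) (simp add: power_minus[of x])
  finally show ?thesis by simp
qed

lemma binom_alt: "n > 0 \<Longrightarrow> (\<Sum>k=0..n. (-1)^k * real (n choose k)) = 0"
  using choose_alternating_sum[of n] by (simp add: atLeast0AtMost)

definition cc :: "nat \<Rightarrow> real" where
  "cc n = (\<Sum>k=0..n. (-1)^k * real (n choose k) * ln (real k + 1))"

lemma binom_int:
  assumes "n > 0"
  shows "((\<lambda>x. (1-x)^n / ln x) has_integral cc n) {0..1}"
proof -
  have "((\<lambda>x. \<Sum>k=0..n. (-1)^k * real (n choose k) * FF k x) has_integral cc n) {0..1}"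
    unfolding cc_def by (rule has_integral_sum[OF finite_atLeastAtMost], rule has_integral_mult_right[OF FF_integral])
  moreover have "(\<Sum>k=0..n. (-1)^k * real (n choose k) * FF k x) = (1-x)^n / ln x" for x
  proof -
    have e: "(-1)^k * real (n choose k) * FF k x = ((-1)^k * real (n choose k) * x^k - (-1)^k * real (n choose k)) / ln x" for k
      by (simp only: FF_def times_divide_eq_right right_diff_distrib mult_1_right)
    have "(\<Sum>k=0..n. (-1)^k * real (n choose k) * FF k x)
        = (\<Sum>k=0..n. ((-1)^k * real (n choose k) * x^k - (-1)^k * real (n choose k)) / ln x)"
      by (intro sum.cong refl e)
    also have "\<dots> = ((\<Sum>k=0..n. (-1)^k * real (n choose k) * x^k) - (\<Sum>k=0..n. (-1)^k * real (n choose k))) / ln x"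
      by (simp only: sum_divide_distrib[symmetric] sum_subtractf)
    also have "\<dots> = (1-x)^n / ln x" using binom_alt[OF assms] binom_poly[of n x] by simp
    finally show ?thesis .
  qed
  ultimately show ?thesis by simp
qed


lemma key_bound: fixes x :: real shows "x \<in> {0..1} \<Longrightarrow> \<bar>(1-x)^(Suc n) / ln x\<bar> \<le> 1"
proof -
  assume x: "x \<in> {0..1}"
  show ?thesis
  proof (cases "x = 0 \<or> x = 1")
    case True then show ?thesis by auto
  next
    case False
    then have x: "0 < x" "x < 1" using x by auto
    then have l: "ln x < 0" by simp
    have "(1-x)^(Suc n) = (1-x) * (1-x)^n" by simp
    also have "\<dots> \<le> (1-x) * 1" using x by (intro mult_left_mono power_le_one) auto
    also have "\<dots> \<le> - ln x" using ln_le_minus_one[of x] x by simp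
    finally have a: "(1-x)^(Suc n) \<le> - ln x" .
    have "(1-x)^(Suc n) / ln x \<le> 0" using x l by (intro divide_nonneg_neg) auto
    then have "\<bar>(1-x)^(Suc n) / ln x\<bar> = - ((1-x)^(Suc n) / ln x)" by (rule abs_of_nonpos)
    also have "\<dots> = (1-x)^(Suc n) / (- ln x)" by simp
    also have "\<dots> \<le> 1" using a l by (subst pos_divide_le_eq) auto
    finally show ?thesis .
  qed
qed

lemma cc_bound: "\<bar>cc (Suc n)\<bar> \<le> 1"
proof -
  have hi: "((\<lambda>x. (1-x)^(Suc n) / ln x) has_integral cc (Suc n)) {0..1}" by (rule binom_int) simp
  have "(\<lambda>x::real. (1-x)^(Suc n) / ln x) integrable_on {0..1}" using hi by (rule has_integral_integrable)
  then have "norm (integral {0..1} (\<lambda>x::real. (1-x)^(Suc n) / ln x)) \<le> 1 * (1 - 0)"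
    by (rule int_bound_ivl) (use key_bound in auto)
  moreover have "integral {0..1} (\<lambda>x::real. (1-x)^(Suc n) / ln x) = cc (Suc n)"
    using hi by (rule integral_unique)
  ultimately show ?thesis by simp
qed


lemma q_facts:
  fixes w :: complex and x :: real
  assumes w: "norm w < 1" and x: "x \<in> {0..1}"
  shows "norm (w * of_real (1 - x)) < 1" "0 < Re (1 - w * of_real (1 - x))"
    "1 - w * of_real (1 - x) \<notin> \<real>\<^sub>\<le>\<^sub>0" "1 - w * of_real (1 - x) \<noteq> 0"
proof -
  have "norm (w * of_real (1 - x)) = norm w * \<bar>1 - x\<bar>" by (simp only: norm_mult norm_of_real)
  also have "\<dots> \<le> norm w * 1" using x by (intro mult_left_mono) auto
  finally show n: "norm (w * of_real (1 - x)) < 1" using w by simp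
  have "Re (w * of_real (1 - x)) \<le> norm (w * of_real (1 - x))" by (rule complex_Re_le_cmod)
  then show r: "0 < Re (1 - w * of_real (1 - x))" using n by simp
  then show "1 - w * of_real (1 - x) \<notin> \<real>\<^sub>\<le>\<^sub>0" by (simp add: complex_nonpos_Reals_iff)
  show "1 - w * of_real (1 - x) \<noteq> 0"
  proof
    assume "1 - w * of_real (1 - x) = 0"
    then have "Re (1 - w * of_real (1 - x)) = 0" by (simp only: zero_complex.sel)
    then show False using r by linarith
  qed
qed

lemma int_A:
  fixes w :: complex
  assumes w: "norm w < 1"
  shows "((\<lambda>x. w / (1 - w * of_real (1 - x))) has_integral (- Ln (1 - w))) {0..1}"
proof -
  define F where "F = (\<lambda>x::real. Ln (1 - w * of_real (1 - x)))"
  have "((\<lambda>x. w / (1 - w * of_real (1 - x))) has_integral (F 1 - F 0)) {0..1}"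
  proof (rule fundamental_theorem_of_calculus)
    fix x :: real assume x: "x \<in> {0..1}"
    note q = q_facts[OF w x]
    have "((\<lambda>z. Ln (1 - w * (1 - z))) has_field_derivative inverse (1 - w * (1 - of_real x)) * w) (at (of_real x))"
      using q by (auto intro!: derivative_eq_intros)
    then have "((\<lambda>z. Ln (1 - w * (1 - z))) has_field_derivative w / (1 - w * of_real (1 - x))) (at (of_real x))"
      by (simp add: field_simps)
    from has_vector_derivative_real_field[OF this]
    show "(F has_vector_derivative w / (1 - w * of_real (1 - x))) (at x within {0..1})"
      by (simp add: F_def)
  qed simp
  then show ?thesis by (simp add: F_def)
qed

lemma geo_bound:
  fixes r :: real assumes "0 \<le> r" "r < 1"
  shows "(\<Sum>i<N. r^i) \<le> 1 / (1 - r)"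
proof -
  have "(\<Sum>i<N. r^i) = (1 - r^N) / (1 - r)" using assms by (simp add: sum_gp_strict)
  also have "\<dots> \<le> 1 / (1 - r)" using assms by (intro divide_right_mono) auto
  finally show ?thesis .
qed

lemma int_S:
  fixes w :: complex assumes w: "norm w < 1"
  shows "(\<lambda>n. w^(Suc n) * of_real (cc (Suc n))) sums
           integral {0<..<1} (\<lambda>x. w * of_real (1-x) / ((1 - w * of_real (1-x)) * of_real (ln x)))"
    and "(\<lambda>x. w * of_real (1-x) / ((1 - w * of_real (1-x)) * of_real (ln x))) integrable_on {0<..<1}"
proof -
  define S where "S = (\<lambda>x. w * of_real (1-x) / ((1 - w * of_real (1-x)) * of_real (ln x)))"
  define g where "g = (\<lambda>n. w^(Suc n) * of_real (cc (Suc n)))"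
  define t where "t = (\<lambda>n (x::real). w^(Suc n) * of_real ((1-x)^(Suc n) / ln x))"
  define fN where "fN = (\<lambda>N x. \<Sum>n<N. t n x)"
  have ti: "(t n has_integral g n) {0<..<1}" for n
  proof -
    have "((\<lambda>x::real. (1-x)^(Suc n) / ln x) has_integral cc (Suc n)) {0..1}" by (rule binom_int) simp
    then have "((\<lambda>x::real. of_real ((1-x)^(Suc n) / ln x) :: complex) has_integral of_real (cc (Suc n))) {0..1}"
      by (rule has_integral_of_real)
    then have "(t n has_integral g n) {0..1}"
      unfolding t_def g_def by (rule has_integral_mult_right)
    then show ?thesis by (simp add: has_integral_Icc_iff_Ioo)
  qed
  have fi: "(fN N has_integral (\<Sum>n<N. g n)) {0<..<1}" for N
    unfolding fN_def by (rule has_integral_sum[OF finite_lessThan], rule ti)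
  have tb: "norm (t n x) \<le> norm w ^ n" if x: "x \<in> {0<..<1}" for n x
  proof -
    have "norm (t n x) = norm w ^ (Suc n) * \<bar>(1-x)^(Suc n) / ln x\<bar>"
      by (simp only: t_def norm_mult norm_power norm_of_real)
    also have "\<dots> \<le> norm w ^ (Suc n) * 1"
      using key_bound[of x n] x by (intro mult_left_mono) auto
    also have "\<dots> \<le> norm w ^ n" using w by (simp add: mult_left_le_one_le)
    finally show ?thesis .
  qed
  have bnd: "norm (fN N x) \<le> 1 / (1 - norm w)" if x: "x \<in> {0<..<1}" for N x
  proof -
    have "norm (fN N x) \<le> (\<Sum>n<N. norm (t n x))" unfolding fN_def by (rule norm_sum)
    also have "\<dots> \<le> (\<Sum>n<N. norm w ^ n)" by (intro sum_mono tb x)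
    also have "\<dots> \<le> 1 / (1 - norm w)" using w by (intro geo_bound) auto
    finally show ?thesis .
  qed
  have conv: "(\<lambda>N. fN N x) \<longlonglongrightarrow> S x" if x: "x \<in> {0<..<1}" for x
  proof -
    define q where "q = w * of_real (1 - x)"
    have qn: "norm q < 1" using q_facts(1)[OF w, of x] x by (simp add: q_def)
    have "(\<lambda>n. q^n) sums (1 / (1 - q))" by (rule geometric_sums[OF qn])
    then have "(\<lambda>n. q * q^n) sums (q * (1 / (1 - q)))" by (rule sums_mult)
    then have "(\<lambda>n. q * q^n / of_real (ln x)) sums (q * (1 / (1 - q)) / of_real (ln x))" by (rule sums_divide)
    moreover have "q * q^n / of_real (ln x) = t n x" for n
      by (simp add: q_def t_def power_mult_distrib of_real_divide of_real_power)
    moreover have "q * (1 / (1 - q)) / of_real (ln x) = S x"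
      by (simp add: q_def S_def)
    ultimately have "(\<lambda>n. t n x) sums S x" by simp
    then show ?thesis by (simp add: sums_def fN_def)
  qed
  have hint: "(\<lambda>x::real. 1 / (1 - norm w)) integrable_on {0<..<1}"
    by (rule integrable_on_Icc_iff_Ioo[THEN iffD1, OF integrable_const_ivl])
  have fint: "fN N integrable_on {0<..<1}" for N using fi by blast
  note dc = dominated_convergence[OF fint hint bnd conv]
  show "S integrable_on {0<..<1}" by (rule dc(1))
  have "integral {0<..<1} (fN N) = (\<Sum>n<N. g n)" for N using fi by (rule integral_unique)
  then show "g sums integral {0<..<1} S" using dc(2) by (simp add: sums_def)
qed

lemma alg_id:
  fixes w L X D c :: complex
  assumes "D \<noteq> 0" "L \<noteq> 0" "c \<noteq> 0"
  shows "w * ((1 - X + L) / ((D / c) * L)) = c * (w / D + w * (1 - X) / (D * L))"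
  using assms by (simp add: field_simps)

lemma part2:
  fixes w :: complex assumes w: "norm w < 1"
  shows "(\<lambda>n. w^(Suc n) * of_real (cc (Suc n))) sums
           integral {0<..<1} (\<lambda>x. w * of_real (1-x) / ((1 - w * of_real (1-x)) * of_real (ln x)))"
    and "w * gen_euler_gamma (- w / (1 - w)) = - (1 - w) * Ln (1 - w) +
           (1 - w) * integral {0<..<1} (\<lambda>x. w * of_real (1-x) / ((1 - w * of_real (1-x)) * of_real (ln x)))"
proof -
  define S where "S = (\<lambda>x. w * of_real (1-x) / ((1 - w * of_real (1-x)) * of_real (ln x)))"
  define A where "A = (\<lambda>x. w / (1 - w * of_real (1 - x)))"
  define \<Phi> where "\<Phi> = (\<lambda>x. complex_of_real (1 - x + ln x) / ((1 - complex_of_real x * (- w / (1 - w))) * complex_of_real (ln x)))"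
  show "(\<lambda>n. w^(Suc n) * of_real (cc (Suc n))) sums integral {0<..<1} S"
    unfolding S_def by (rule int_S[OF w])
  have Si: "S integrable_on {0<..<1}" unfolding S_def by (rule int_S[OF w])
  have w1: "1 - w \<noteq> 0" using w by auto
  show "w * gen_euler_gamma (- w / (1 - w)) = - (1 - w) * Ln (1 - w) + (1 - w) * integral {0<..<1} S"
  proof (cases "w = 0")
    case True then show ?thesis by (simp add: S_def)
  next
    case False
    define V where "V = (1 - w) * (- Ln (1 - w) + integral {0<..<1} S)"
    have "((\<lambda>x. (1 - w) * (A x + S x)) has_integral V) {0<..<1}"
      unfolding V_def
      by (intro has_integral_mult_right has_integral_add integrable_integral Si)
         (use int_A[OF w] in \<open>simp add: A_def has_integral_Icc_iff_Ioo\<close>)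
    moreover have "w * \<Phi> x = (1 - w) * (A x + S x)" if x: "x \<in> {0<..<1}" for x
    proof -
      have x01: "x \<in> {0..1}" using x by auto
      note q = q_facts[OF w x01]
      have l: "complex_of_real (ln x) \<noteq> 0" using x by simp
      have d: "1 - complex_of_real x * (- w / (1 - w)) = (1 - w * of_real (1 - x)) / (1 - w)"
        using w1 by (simp add: field_simps)
      have "w * \<Phi> x = w * ((1 - of_real x + of_real (ln x)) / (((1 - w * of_real (1 - x)) / (1 - w)) * of_real (ln x)))"
        unfolding \<Phi>_def d by simp
      also have "\<dots> = (1 - w) * (w / (1 - w * of_real (1 - x)) + w * (1 - of_real x) / ((1 - w * of_real (1 - x)) * of_real (ln x)))"
        by (rule alg_id[OF q(4) l w1])
      also have "\<dots> = (1 - w) * (A x + S x)" by (simp add: A_def S_def)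
      finally show ?thesis .
    qed
    ultimately have "((\<lambda>x. w * \<Phi> x) has_integral V) {0<..<1}"
      using has_integral_cong[of "{0<..<1}" "\<lambda>x. w * \<Phi> x" "\<lambda>x. (1 - w) * (A x + S x)"] by auto
    then have "(\<Phi> has_integral V / w) {0<..<1}" using has_integral_mult_right_iff[OF False] by auto
    then have "integral {0..1} \<Phi> = V / w" by (simp add: integral_open_interval_real integral_unique)
    then have "gen_euler_gamma (- w / (1 - w)) = V / w" by (simp add: gen_euler_gamma_def \<Phi>_def)
    then have "w * gen_euler_gamma (- w / (1 - w)) = V" using False by simp
    moreover have "V = - (1 - w) * Ln (1 - w) + (1 - w) * integral {0<..<1} S"
      unfolding V_def by (simp add: algebra_simps)
    ultimately show ?thesis by simp
  qed
qed


lemma part2_full: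
  fixes w :: complex assumes w: "norm w < 1"
  shows "(let g = (\<lambda>n::nat. w ^ (Suc n) *
                    (\<Sum>k=0..Suc n. (-1) ^ k * of_nat (Suc n choose k) * complex_of_real (ln (real k + 1))))
             in summable g \<and> w * gen_euler_gamma (- w / (1 - w)) =
                  - (1 - w) * Ln (1 - w) + (1 - w) * (\<Sum>n. g n))"
proof -
  define g where "g = (\<lambda>n::nat. w ^ (Suc n) *
                    (\<Sum>k=0..Suc n. (-1) ^ k * of_nat (Suc n choose k) * complex_of_real (ln (real k + 1))))"
  have "g = (\<lambda>n. w^(Suc n) * of_real (cc (Suc n)))"
    by (simp add: g_def cc_def)
  then have s: "g sums integral {0<..<1} (\<lambda>x. w * of_real (1-x) / ((1 - w * of_real (1-x)) * of_real (ln x)))"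
    using part2(1)[OF w] by simp
  show ?thesis unfolding Let_def g_def[symmetric]
    using s part2(2)[OF w] by (simp add: sums_iff)
qed

theorem theorem9:
  shows "(\<forall>z::complex. Re z < 1/2 \<longrightarrow>
            (let f = (\<lambda>n::nat. ((- z) / (1 - z)) ^ (Suc n) *
                    (\<Sum>k=0..Suc n. (-1) ^ (k + 1) * of_nat (Suc n choose k) * complex_of_real (ln (real k + 1))))
             in summable f \<and> z * gen_euler_gamma z = - Ln (1 - z) + (\<Sum>n. f n)))
       \<and> (\<forall>w::complex. norm w < 1 \<longrightarrow>
            (let g = (\<lambda>n::nat. w ^ (Suc n) *
                    (\<Sum>k=0..Suc n. (-1) ^ k * of_nat (Suc n choose k) * complex_of_real (ln (real k + 1))))
             in summable g \<and> w * gen_euler_gamma (- w / (1 - w)) =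
                  - (1 - w) * Ln (1 - w) + (1 - w) * (\<Sum>n. g n)))"
proof (intro conjI allI impI)
  fix w :: complex assume "norm w < 1"
  then show "let g = (\<lambda>n::nat. w ^ (Suc n) *
                    (\<Sum>k=0..Suc n. (-1) ^ k * of_nat (Suc n choose k) * complex_of_real (ln (real k + 1))))
             in summable g \<and> w * gen_euler_gamma (- w / (1 - w)) =
                  - (1 - w) * Ln (1 - w) + (1 - w) * (\<Sum>n. g n)" by (rule part2_full)
next
  fix z :: complex assume z: "Re z < 1/2"
  define w where "w = - z / (1 - z)"
  have z1: "1 - z \<noteq> 0" using z by (auto simp: complex_eq_iff)
  have "norm z ^ 2 < norm (1 - z) ^ 2"
    using z unfolding cmod_power2 by (simp add: power2_eq_square algebra_simps)
  then have nz: "norm z < norm (1 - z)" by (rule power2_less_imp_less) simp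
  have wn: "norm w < 1" using nz z1 by (simp add: w_def norm_divide divide_less_eq)
  define g where "g = (\<lambda>n::nat. w ^ (Suc n) *
                    (\<Sum>k=0..Suc n. (-1) ^ k * of_nat (Suc n choose k) * complex_of_real (ln (real k + 1))))"
  define f where "f = (\<lambda>n::nat. ((- z) / (1 - z)) ^ (Suc n) *
                    (\<Sum>k=0..Suc n. (-1) ^ (k + 1) * of_nat (Suc n choose k) * complex_of_real (ln (real k + 1))))"
  have P: "summable g \<and> w * gen_euler_gamma (- w / (1 - w)) = - (1 - w) * Ln (1 - w) + (1 - w) * (\<Sum>n. g n)"
    using part2_full[OF wn] by (simp add: g_def Let_def)
  have inner: "(\<Sum>k=0..m. (-1) ^ (k + 1) * of_nat (m choose k) * complex_of_real (ln (real k + 1)))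
      = - (\<Sum>k=0..m. (-1) ^ k * of_nat (m choose k) * complex_of_real (ln (real k + 1)))" for m
    by (subst sum_negf[symmetric], rule sum.cong) auto
  have fg: "f = (\<lambda>n. - g n)"
  proof (rule ext)
    fix n
    have "f n = w ^ (Suc n) * (- (\<Sum>k=0..Suc n. (-1) ^ k * of_nat (Suc n choose k) * complex_of_real (ln (real k + 1))))"
      unfolding f_def inner w_def by simp
    then show "f n = - g n" by (simp only: g_def mult_minus_right)
  qed
  have sf: "summable f" using P by (simp add: fg summable_minus)
  have Sf: "(\<Sum>n. f n) = - (\<Sum>n. g n)" using P by (simp add: fg suminf_minus)
  have w1: "1 - w = 1 / (1 - z)" using z1 by (simp add: w_def field_simps)
  have wz: "- w / (1 - w) = z" using z1 by (simp add: w1 w_def field_simps)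
  have nr: "1 - z \<notin> \<real>\<^sub>\<le>\<^sub>0" using z by (simp add: complex_nonpos_Reals_iff)
  have Lw: "Ln (1 - w) = - Ln (1 - z)"
    using Ln_inverse[OF nr] by (simp add: w1 inverse_eq_divide)
  have E: "w * gen_euler_gamma z = - (1 - w) * Ln (1 - w) + (1 - w) * (\<Sum>n. g n)" using P wz by simp
  have "z * gen_euler_gamma z = - Ln (1 - z) + (\<Sum>n. f n)"
  proof -
    have w2: "w = - z * (1 - w)" by (subst w1) (simp add: w_def)
    have nw: "1 - w \<noteq> 0" using z1 by (simp add: w1)
    have "(1 - w) * (- z * gen_euler_gamma z) = w * gen_euler_gamma z"
      by (subst (2) w2) (simp only: mult_ac)
    also have "\<dots> = (1 - w) * (Ln (1 - z) + (\<Sum>n. g n))"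
      unfolding E Lw by (simp add: algebra_simps)
    finally have X: "(1 - w) * (- z * gen_euler_gamma z) = (1 - w) * (Ln (1 - z) + (\<Sum>n. g n))" .
    have "- z * gen_euler_gamma z = Ln (1 - z) + (\<Sum>n. g n)"
      using mult_left_cancel[OF nw] X by blast
    then have "z * gen_euler_gamma z = - (Ln (1 - z) + (\<Sum>n. g n))"
      by (metis minus_minus mult_minus_left)
    then show ?thesis using Sf by simp
  qed
  then show "let f = (\<lambda>n::nat. ((- z) / (1 - z)) ^ (Suc n) *
                    (\<Sum>k=0..Suc n. (-1) ^ (k + 1) * of_nat (Suc n choose k) * complex_of_real (ln (real k + 1))))
             in summable f \<and> z * gen_euler_gamma z = - Ln (1 - z) + (\<Sum>n. f n)"
    unfolding f_def[symmetric] Let_def using sf by simp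
qed

end
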